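(* Let $H\in(0,1)$, $\delta\in(0,H)$, $\rho>0$, and let $B^H$ be a fractional Brownian motion on $[0,1]$ with Hurst index $H$. For $n\ge1$ let $\mathcal{E}_n$ be the event that there exist $m\ge1$ and $1\le k\le 2^{n+m-1}$ with $|\mu_n(m,k)|>\tfrac{\rho}{2}2^{-(n+m)(H-\delta)}$, and let $\mathcal{N}_{\mathcal{E}}=\sup\{n\ge1:\mathcal{E}_n\text{ happens}\}$. Then $\mathbb{P}(\limsup_{n\to\infty}\mathcal{E}_n)=0$, and $\mathcal{N}_{\mathcal{E}}$ has a finite moment generating function.
   Context: A fractional Brownian motion with Hurst index $H$ is a centered Gaussian process with $B^H(0)=0$ and covariance $\mathbb{E}[B^H(s)B^H(t)]=\tfrac12(|s|^{2H}+|t|^{2H}-|s-t|^{2H})$. $t^n_i=i/2^n$, $\mathbf{B}^H_n=(B^H(t^n_0),\dots,B^H(t^n_{2^n}))$, $\boldsymbol\alpha_n(m,k)=(B^H(t^{n+m}_{2k-2}),B^H(t^{n+m}_{2k-1}),B^H(t^{n+m}_{2k}))^\top$, $\boldsymbol\beta=(1/2,-1,1/2)^\top$, and $\mu_n(m,k)=\boldsymbol\beta^\top\mathbb{E}[\boldsymbol\alpha_n(m,k)\mid\mathbf{B}^H_n]$. *)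

theory Defs
  imports "HOL-Probability.Probability"
begin

definition fbm_cov :: "real \<Rightarrow> real \<Rightarrow> real \<Rightarrow> real" where
  "fbm_cov H s t = (\<bar>s\<bar> powr (2*H) + \<bar>t\<bar> powr (2*H) - \<bar>s - t\<bar> powr (2*H)) / 2"

definition centered_normal :: "real \<Rightarrow> real measure" where
  "centered_normal v = (if v = 0 then return borel 0
                        else density lborel (normal_density 0 (sqrt v)))"

definition is_fBM :: "'a measure \<Rightarrow> real \<Rightarrow> (real \<Rightarrow> 'a \<Rightarrow> real) \<Rightarrow> bool" where
  "is_fBM M H B \<longleftrightarrow> prob_space M
     \<and> (\<forall>t\<in>{0..1}. B t \<in> borel_measurable M)
     \<and> (\<forall>\<omega>\<in>space M. B 0 \<omega> = 0)
     \<and> (\<forall>s\<in>{0..1}. \<forall>t\<in>{0..1}. integrable M (\<lambda>\<omega>. B s \<omega> * B t \<omega>)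
            \<and> (\<integral>\<omega>. B s \<omega> * B t \<omega> \<partial>M) = fbm_cov H s t)
     \<and> (\<forall>ts cs. set ts \<subseteq> {0..1} \<and> length cs = length ts \<longrightarrow>
          distr M borel (\<lambda>\<omega>. \<Sum>i<length ts. cs!i * B (ts!i) \<omega>)
          = centered_normal (\<Sum>i<length ts. \<Sum>j<length ts. cs!i * cs!j * fbm_cov H (ts!i) (ts!j)))"

definition dyad :: "nat \<Rightarrow> nat \<Rightarrow> real" where
  "dyad n i = real i / 2 ^ n"

definition gen_sigma :: "'a measure \<Rightarrow> (real \<Rightarrow> 'a \<Rightarrow> real) \<Rightarrow> nat \<Rightarrow> 'a measure" where
  "gen_sigma M B n = sigma (space M)
     (\<Union>i\<in>{0..2^n}. {B (dyad n i) -` A \<inter> space M | A. A \<in> sets borel})"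

text \<open>mu_n(m,k) = beta^T E[alpha_n(m,k) | B_n], with the conditional expectation of the
  vector taken componentwise.\<close>
definition mu :: "'a measure \<Rightarrow> (real \<Rightarrow> 'a \<Rightarrow> real) \<Rightarrow> nat \<Rightarrow> nat \<Rightarrow> nat \<Rightarrow> 'a \<Rightarrow> real" where
  "mu M B n m k \<omega> =
      (1/2) * real_cond_exp M (gen_sigma M B n) (B (dyad (n+m) (2*k-2))) \<omega>
    - real_cond_exp M (gen_sigma M B n) (B (dyad (n+m) (2*k-1))) \<omega>
    + (1/2) * real_cond_exp M (gen_sigma M B n) (B (dyad (n+m) (2*k))) \<omega>"

definition evE :: "'a measure \<Rightarrow> (real \<Rightarrow> 'a \<Rightarrow> real) \<Rightarrow> real \<Rightarrow> real \<Rightarrow> real \<Rightarrow> nat \<Rightarrow> 'a set" where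
  "evE M B H \<delta> \<rho> n = {\<omega>\<in>space M. \<exists>m\<ge>1. \<exists>k\<in>{1..2^(n+m-1)}.
      \<bar>mu M B n m k \<omega>\<bar> > \<rho>/2 * 2 powr (- real (n+m) * (H - \<delta>))}"

end

theory Submission
  imports Defs
begin

lemma dyad_in: "i \<le> 2^n \<Longrightarrow> dyad n i \<in> {0..1}"
proof -
  assume "i \<le> 2^n"
  then have "real i \<le> real (2^n)" by (simp only: of_nat_le_iff)
  then have "real i \<le> 2^n" by simp
  then show ?thesis by (simp add: dyad_def)
qed

lemma fbmD:
  assumes "is_fBM M H B"
  shows fbm_prob: "prob_space M"
    and fbm_meas: "\<And>t. t \<in> {0..1} \<Longrightarrow> B t \<in> borel_measurable M"
    and fbm_sq: "\<And>s t. s \<in> {0..1} \<Longrightarrow> t \<in> {0..1} \<Longrightarrow> integrable M (\<lambda>\<omega>. B s \<omega> * B t \<omega>)"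
    and fbm_gauss: "\<And>ts cs. set ts \<subseteq> {0..1} \<Longrightarrow> length cs = length ts \<Longrightarrow>
          distr M borel (\<lambda>\<omega>. \<Sum>i<length ts. cs!i * B (ts!i) \<omega>)
          = centered_normal (\<Sum>i<length ts. \<Sum>j<length ts. cs!i * cs!j * fbm_cov H (ts!i) (ts!j))"
proof -
  note a = assms[unfolded is_fBM_def]
  show "prob_space M" using a by (rule conjunct1)
  show "\<And>t. t \<in> {0..1} \<Longrightarrow> B t \<in> borel_measurable M" using a[THEN conjunct2, THEN conjunct1] by blast
  show "\<And>s t. s \<in> {0..1} \<Longrightarrow> t \<in> {0..1} \<Longrightarrow> integrable M (\<lambda>\<omega>. B s \<omega> * B t \<omega>)"
    using a[THEN conjunct2, THEN conjunct2, THEN conjunct2, THEN conjunct1] by blast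
  show "\<And>ts cs. set ts \<subseteq> {0..1} \<Longrightarrow> length cs = length ts \<Longrightarrow>
          distr M borel (\<lambda>\<omega>. \<Sum>i<length ts. cs!i * B (ts!i) \<omega>)
          = centered_normal (\<Sum>i<length ts. \<Sum>j<length ts. cs!i * cs!j * fbm_cov H (ts!i) (ts!j))"
    using a[THEN conjunct2, THEN conjunct2, THEN conjunct2, THEN conjunct2] by blast
qed

lemma fbm_subalg:
  assumes "is_fBM M H B"
  shows "sigma_finite_subalgebra M (gen_sigma M B n)"
proof -
  have P: "prob_space M" by (rule fbm_prob[OF assms])
  have meas: "\<And>t. t \<in> {0..1} \<Longrightarrow> B t \<in> borel_measurable M" by (rule fbm_meas[OF assms])
  define G where "G = (\<Union>i\<in>{0..2^n}. {B (dyad n i) -` A \<inter> space M | A. A \<in> sets borel})"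
  have G: "G \<subseteq> sets M"
  proof
    fix X assume "X \<in> G"
    then obtain i A where i: "i \<le> 2^n" and A: "A \<in> sets borel" and X: "X = B (dyad n i) -` A \<inter> space M"
      unfolding G_def by auto
    have "B (dyad n i) \<in> borel_measurable M" using meas dyad_in[OF i] by blast
    then show "X \<in> sets M" unfolding X using A by (rule measurable_sets)
  qed
  have Gs: "G \<subseteq> Pow (space M)" unfolding G_def by auto
  have s1: "sets (gen_sigma M B n) = sigma_sets (space M) G"
    unfolding gen_sigma_def G_def[symmetric] using Gs by (rule sets_measure_of)
  have s2: "space (gen_sigma M B n) = space M"
    unfolding gen_sigma_def G_def[symmetric] using Gs by (rule space_measure_of)
  have "sigma_sets (space M) G \<subseteq> sets M" using G by (rule sets.sigma_sets_subset)
  then have "subalgebra M (gen_sigma M B n)"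
    unfolding subalgebra_def s1 s2 by simp
  then have "finite_measure_subalgebra M (gen_sigma M B n)"
    using P unfolding finite_measure_subalgebra_def finite_measure_subalgebra_axioms_def
    using prob_space.axioms(1) by blast
  then show ?thesis by (rule finite_measure_subalgebra_is_sigma_finite)
qed

lemma fbm_int:
  assumes "is_fBM M H B" "t \<in> {0..1}"
  shows "integrable M (B t)"
proof -
  interpret prob_space M by (rule fbm_prob[OF assms(1)])
  have m: "B t \<in> borel_measurable M" by (rule fbm_meas[OF assms])
  have "integrable M (\<lambda>x. B t x * B t x)" by (rule fbm_sq[OF assms(1) assms(2) assms(2)])
  then have "integrable M (\<lambda>x. B t x ^ 2)" by (simp only: power2_eq_square)
  then show ?thesis by (rule square_integrable_imp_integrable[OF m])
qed

lemma fbm_lin_moment: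
  assumes fbm: "is_fBM M H B" and ts: "set ts \<subseteq> {0..1}" and len: "length cs = length ts"
   and v: "v = (\<Sum>i<length ts. \<Sum>j<length ts. cs!i * cs!j * fbm_cov H (ts!i) (ts!j))" and vpos: "0 < v"
  defines "Y \<equiv> \<lambda>\<omega>. \<Sum>i<length ts. cs!i * B (ts!i) \<omega>"
  shows "integrable M (\<lambda>\<omega>. Y \<omega> ^ q)"
    and "(\<integral>\<omega>. Y \<omega> ^ (2*p) \<partial>M) = fact (2*p) / ((2/v)^p * fact p)"
proof -
  have meas: "\<And>t. t \<in> {0..1} \<Longrightarrow> B t \<in> borel_measurable M" by (rule fbm_meas[OF fbm])
  have Ym: "Y \<in> borel_measurable M"
    unfolding Y_def
  proof (intro borel_measurable_sum borel_measurable_times borel_measurable_const meas)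
    fix i assume "i \<in> {..<length ts}"
    then show "ts ! i \<in> {0..1}" using ts by (auto simp: subset_iff)
  qed
  have D: "distr M borel Y = density lborel (normal_density 0 (sqrt v))"
    unfolding Y_def fbm_gauss[OF fbm ts len] v[symmetric] centered_normal_def using vpos by simp
  have sv: "0 < sqrt v" using vpos by simp
  have "integrable lborel (\<lambda>x. normal_density 0 (sqrt v) x * (x - 0) ^ q)"
    using sv by (rule integrable_normal_moment)
  then have "integrable (density lborel (normal_density 0 (sqrt v))) (\<lambda>x. x ^ q)"
    by (subst integrable_density) auto
  then have "integrable (distr M borel Y) (\<lambda>x. x ^ q)" using D by simp
  then show "integrable M (\<lambda>\<omega>. Y \<omega> ^ q)"
    by (subst (asm) integrable_distr_eq[OF Ym]) auto
  have "(\<integral>\<omega>. Y \<omega> ^ (2*p) \<partial>M) = integral\<^sup>L (distr M borel Y) (\<lambda>x. x ^ (2*p))"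
    by (subst integral_distr[OF Ym]) auto
  also have "\<dots> = integral\<^sup>L (density lborel (normal_density 0 (sqrt v))) (\<lambda>x. x ^ (2*p))"
    using D by simp
  also have "\<dots> = (\<integral>x. normal_density 0 (sqrt v) x * (x - 0) ^ (2*p) \<partial>lborel)"
    by (subst integral_density) auto
  also have "\<dots> = fact (2*p) / ((2/(sqrt v)\<^sup>2)^p * fact p)"
    by (rule integral_normal_moment_even[OF sv])
  also have "\<dots> = fact (2*p) / ((2/v)^p * fact p)" using vpos by simp
  finally show "(\<integral>\<omega>. Y \<omega> ^ (2*p) \<partial>M) = fact (2*p) / ((2/v)^p * fact p)" .
qed

lemma var_calc:
  fixes H :: real and j k :: nat
  assumes k: "1 \<le> k" and H: "0 < H"
  defines "ts \<equiv> [dyad j (2*k-2), dyad j (2*k-1), dyad j (2*k)]"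
  defines "cs \<equiv> [1/2, -1, 1/2::real]"
  shows "(\<Sum>i<length ts. \<Sum>l<length ts. cs!i * cs!l * fbm_cov H (ts!i) (ts!l))
          = (1/2^j) powr (2*H) * (1 - 4 powr H / 4)"
proof -
  define h :: real where "h = 1/2^j"
  have hp: "0 < h" by (simp add: h_def)
  have a: "dyad j (2*k-2) = (2*real k - 2) * h" using k by (simp add: dyad_def h_def of_nat_diff)
  have b: "dyad j (2*k-1) = (2*real k - 1) * h" using k by (simp add: dyad_def h_def of_nat_diff)
  have c: "dyad j (2*k) = (2*real k) * h" by (simp add: dyad_def h_def)
  define x where "x = (2*real k - 2) * h"
  have ts': "ts = [x, x+h, x+2*h]" unfolding ts_def a b c x_def by (auto simp: algebra_simps)
  have p2: "(2*h) powr (2*H) = 4 powr H * h powr (2*H)"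
  proof -
    have "(2*h) powr (2*H) = 2 powr (2*H) * h powr (2*H)" using hp by (simp add: powr_mult)
    moreover have "(2::real) powr (2*H) = 4 powr H"
      by (simp add: powr_powr[symmetric])
    ultimately show ?thesis by simp
  qed
  define X0 where "X0 = \<bar>x\<bar> powr (2*H)"
  define X1 where "X1 = \<bar>x+h\<bar> powr (2*H)"
  define X2 where "X2 = \<bar>x+2*h\<bar> powr (2*H)"
  define Q where "Q = h powr (2*H)"
  have c00: "fbm_cov H x x = X0" unfolding fbm_cov_def X0_def by simp
  have c11: "fbm_cov H (x+h) (x+h) = X1" unfolding fbm_cov_def X1_def by simp
  have c22: "fbm_cov H (x+2*h) (x+2*h) = X2" unfolding fbm_cov_def X2_def by simp
  have c01: "fbm_cov H x (x+h) = (X0 + X1 - Q)/2" "fbm_cov H (x+h) x = (X0 + X1 - Q)/2"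
    unfolding fbm_cov_def X0_def X1_def Q_def using hp by simp_all
  have c12: "fbm_cov H (x+h) (x+2*h) = (X1 + X2 - Q)/2" "fbm_cov H (x+2*h) (x+h) = (X1 + X2 - Q)/2"
    unfolding fbm_cov_def X2_def X1_def Q_def using hp by simp_all
  have c02: "fbm_cov H x (x+2*h) = (X0 + X2 - 4 powr H * Q)/2" "fbm_cov H (x+2*h) x = (X0 + X2 - 4 powr H * Q)/2"
    unfolding fbm_cov_def X2_def X0_def Q_def using hp p2 by simp_all
  have S: "(\<Sum>i<length ts. \<Sum>l<length ts. cs!i * cs!l * fbm_cov H (ts!i) (ts!l))
     = 1/4 * fbm_cov H x x - 1/2 * fbm_cov H x (x+h) + 1/4 * fbm_cov H x (x+2*h)
       - 1/2 * fbm_cov H (x+h) x + fbm_cov H (x+h) (x+h) - 1/2 * fbm_cov H (x+h) (x+2*h)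
       + 1/4 * fbm_cov H (x+2*h) x - 1/2 * fbm_cov H (x+2*h) (x+h) + 1/4 * fbm_cov H (x+2*h) (x+2*h)"
    unfolding ts' cs_def by (simp add: lessThan_nat_numeral)
  show ?thesis unfolding S c00 c11 c22 c01 c12 c02 h_def[symmetric] Q_def[symmetric]
    apply (simp add: algebra_simps) by (simp add: field_simps)
qed

lemma core_bound:
  assumes fbm: "is_fBM M H B" and H: "0 < H" "H < 1" and m: "1 \<le> m"
    and k: "k \<in> {1..2^(n+m-1)}" and p: "1 \<le> p"
  shows "(\<integral>\<^sup>+\<omega>. ennreal ((mu M B n m k \<omega>) ^ (2*p)) \<partial>M)
          \<le> ennreal (fact (2*p) / (2^p * fact p) * ((1/2^(n+m)) powr (2*H)) ^ p)"
proof -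
  define j where "j = n + m"
  define F where "F = gen_sigma M B n"
  interpret sigma_finite_subalgebra M F unfolding F_def by (rule fbm_subalg[OF fbm])
  define ts where "ts = [dyad j (2*k-2), dyad j (2*k-1), dyad j (2*k)]"
  define cs where "cs = [1/2, -1, 1/2::real]"
  have k1: "1 \<le> k" and k2: "k \<le> 2^(j-1)" using k by (auto simp: j_def)
  have j1: "1 \<le> j" using m by (simp add: j_def)
  have "2 * k \<le> 2 * 2^(j-1)" using k2 by simp
  also have "2 * 2^(j-1) = (2::nat)^j" using j1 by (simp add: power_eq_if)
  finally have k3: "2*k \<le> 2^j" .
  have inr: "\<And>i. i \<le> 2*k \<Longrightarrow> dyad j i \<in> {0..1}"
  proof -
    fix i assume "i \<le> 2*k"
    then have "i \<le> 2^j" using k3 by simp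
    then have "real i \<le> real (2^j)" by (simp only: of_nat_le_iff)
    then have "real i \<le> 2^j" by simp
    then show "dyad j i \<in> {0..1}" by (simp add: dyad_def)
  qed
  have tsin: "set ts \<subseteq> {0..1}" unfolding ts_def using inr by auto
  define v where "v = (\<Sum>i<length ts. \<Sum>l<length ts. cs!i * cs!l * fbm_cov H (ts!i) (ts!l))"
  define h where "h = (1/2^j::real) powr (2*H)"
  have vv: "v = h * (1 - 4 powr H / 4)" unfolding v_def h_def ts_def cs_def
    by (rule var_calc[OF k1 H(1)])
  have hpos: "0 < h" unfolding h_def by simp
  have "4 powr H < 4 powr 1" using H by (intro powr_less_mono) auto
  then have "4 powr H < 4" by simp
  then have vpos: "0 < v" and vle: "v \<le> h" unfolding vv using hpos powr_ge_zero[of 4 H]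
    by (auto simp: field_simps)
  define Y where "Y = (\<lambda>\<omega>. \<Sum>i<length ts. cs!i * B (ts!i) \<omega>)"
  have Yint: "\<And>q. integrable M (\<lambda>\<omega>. Y \<omega> ^ q)"
    unfolding Y_def by (rule fbm_lin_moment(1)[OF fbm tsin _ v_def vpos]) (simp add: cs_def ts_def)
  have Ymom: "(\<integral>\<omega>. Y \<omega> ^ (2*p) \<partial>M) = fact (2*p) / ((2/v)^p * fact p)"
    unfolding Y_def by (rule fbm_lin_moment(2)[OF fbm tsin _ v_def vpos]) (simp add: cs_def ts_def)
  have Y1: "integrable M Y" using Yint[of 1] by simp
  define a where "a = dyad j (2*k-2)"
  define b where "b = dyad j (2*k-1)"
  define c where "c = dyad j (2*k)"
  have ia: "integrable M (B a)" unfolding a_def by (rule fbm_int[OF fbm inr]) simp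
  have ib: "integrable M (B b)" unfolding b_def by (rule fbm_int[OF fbm inr]) simp
  have ic: "integrable M (B c)" unfolding c_def by (rule fbm_int[OF fbm inr]) simp
  have Yeq: "Y = (\<lambda>\<omega>. (1/2 * B a \<omega> + (-1) * B b \<omega>) + 1/2 * B c \<omega>)"
    by (simp add: Y_def ts_def cs_def a_def b_def c_def eval_nat_numeral)
  have AEmu: "AE \<omega> in M. mu M B n m k \<omega> = real_cond_exp M F Y \<omega>"
  proof -
    have i1: "integrable M (\<lambda>\<omega>. 1/2 * B a \<omega>)" using ia by auto
    have i2: "integrable M (\<lambda>\<omega>. (-1) * B b \<omega>)" using ib by auto
    have i3: "integrable M (\<lambda>\<omega>. 1/2 * B c \<omega>)" using ic by auto
    have i12: "integrable M (\<lambda>\<omega>. 1/2 * B a \<omega> + (-1) * B b \<omega>)" using i1 i2 by auto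
    show ?thesis
      using real_cond_exp_add[OF i12 i3] real_cond_exp_add[OF i1 i2]
        real_cond_exp_cmult[OF ia, of "1/2"] real_cond_exp_cmult[OF ib, of "-1"]
        real_cond_exp_cmult[OF ic, of "1/2"]
      unfolding Yeq
      by eventually_elim (simp add: mu_def F_def j_def a_def b_def c_def)
  qed
  have J: "AE \<omega> in M. real_cond_exp M F Y \<omega> ^ (2*p) \<le> real_cond_exp M F (\<lambda>\<omega>. Y \<omega> ^ (2*p)) \<omega>"
    by (rule real_cond_exp_jensens_inequality(2)[where I=UNIV and a=0 and b=0 and q="\<lambda>x. x^(2*p)", OF Y1])
       (auto intro: Yint convex_power_even)
  have "(\<integral>\<^sup>+\<omega>. ennreal ((mu M B n m k \<omega>) ^ (2*p)) \<partial>M)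
        = (\<integral>\<^sup>+\<omega>. ennreal ((real_cond_exp M F Y \<omega>) ^ (2*p)) \<partial>M)"
    using AEmu by (intro nn_integral_cong_AE) auto
  also have "\<dots> \<le> (\<integral>\<^sup>+\<omega>. ennreal (real_cond_exp M F (\<lambda>\<omega>. Y \<omega> ^ (2*p)) \<omega>) \<partial>M)"
    using J by (intro nn_integral_mono_AE) (auto elim!: eventually_mono intro: ennreal_leI)
  also have "\<dots> = ennreal (\<integral>\<omega>. real_cond_exp M F (\<lambda>\<omega>. Y \<omega> ^ (2*p)) \<omega> \<partial>M)"
  proof (rule nn_integral_eq_integral)
    show "integrable M (real_cond_exp M F (\<lambda>\<omega>. Y \<omega> ^ (2 * p)))" using Yint by auto
    show "AE x in M. 0 \<le> real_cond_exp M F (\<lambda>\<omega>. Y \<omega> ^ (2 * p)) x"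
      using J by eventually_elim (auto intro: order.trans[rotated] simp: zero_le_even_power)
  qed
  also have "\<dots> = ennreal (\<integral>\<omega>. Y \<omega> ^ (2*p) \<partial>M)"
    using Yint by (simp add: real_cond_exp_int(2))
  also have "\<dots> = ennreal (fact (2*p) / (2^p * fact p) * v ^ p)"
    unfolding Ymom using vpos by (simp add: field_simps power_divide)
  also have "\<dots> \<le> ennreal (fact (2*p) / (2^p * fact p) * h ^ p)"
    using vpos vle by (intro ennreal_leI mult_left_mono power_mono) auto
  finally show ?thesis by (simp add: h_def j_def)
qed

lemma pow_powr: "((2::real) powr a) ^ n = 2 powr (a * real n)"
  by (subst powr_realpow[symmetric]) (auto simp: powr_powr)

lemma alg:
  fixes \<rho> H \<delta> C :: real and j p :: nat
  assumes "0 < \<rho>"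
  shows "C * ((1/2^j) powr (2*H)) ^ p / (\<rho>/2 * 2 powr (- real j * (H - \<delta>))) ^ (2*p)
       = C * (4/\<rho>^2)^p * (2 powr (-2*\<delta>*real p)) ^ j"
proof -
  have e1: "(1/2^j::real) powr (2*H) = 2 powr (-(2*H*real j))"
  proof -
    have "(1/2^j::real) = 2 powr (- real j)" by (simp add: powr_minus powr_realpow divide_inverse)
    then show ?thesis by (simp add: powr_powr algebra_simps)
  qed
  have e2: "(\<rho>/2 * 2 powr (- real j * (H - \<delta>))) ^ (2*p) = (\<rho>^2/4)^p * (2 powr (-(2*real j*(H-\<delta>)))) ^ p"
  proof -
    define u where "u = (2::real) powr (- real j * (H - \<delta>))"
    have U: "u^2 = 2 powr (-(2*real j*(H-\<delta>)))" unfolding u_def pow_powr by (simp add: algebra_simps)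
    have A: "(\<rho>/2 * u)^2 = \<rho>^2/4 * 2 powr (-(2*real j*(H-\<delta>)))"
      unfolding U[symmetric] by (simp add: power_mult_distrib power_divide)
    have "(\<rho>/2 * u) ^ (2*p) = (\<rho>^2/4 * 2 powr (-(2*real j*(H-\<delta>)))) ^ p"
      by (simp only: power_mult A)
    then show ?thesis unfolding u_def[symmetric] by (simp only: power_mult_distrib)
  qed
  have e3: "(2 powr (-(2*H*real j))) ^ p / (2 powr (-(2*real j*(H-\<delta>)))) ^ p = (2 powr (-2*\<delta>*real p)) ^ j"
    unfolding pow_powr by (simp add: powr_diff[symmetric] algebra_simps)
  have "C * ((1/2^j) powr (2*H)) ^ p / (\<rho>/2 * 2 powr (- real j * (H - \<delta>))) ^ (2*p)
      = C / (\<rho>^2/4)^p * ((2 powr (-(2*H*real j))) ^ p / (2 powr (-(2*real j*(H-\<delta>)))) ^ p)"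
    unfolding e1 e2 by (simp add: field_simps)
  also have "\<dots> = C * (4/\<rho>^2)^p * (2 powr (-2*\<delta>*real p)) ^ j"
    unfolding e3 by (simp add: power_divide field_simps)
  finally show ?thesis .
qed

definition tt :: "real \<Rightarrow> real \<Rightarrow> real \<Rightarrow> nat \<Rightarrow> real" where
  "tt H \<delta> \<rho> j = \<rho>/2 * 2 powr (- real j * (H - \<delta>))"

definition Fn :: "'a measure \<Rightarrow> (real \<Rightarrow> 'a \<Rightarrow> real) \<Rightarrow> real \<Rightarrow> real \<Rightarrow> real \<Rightarrow> nat \<Rightarrow> nat \<Rightarrow> 'a \<Rightarrow> ennreal" where
  "Fn M B H \<delta> \<rho> p n \<omega> = (\<Sum>m. \<Sum>k\<in>{1..2^(n+Suc m-1)}.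
       ennreal ((mu M B n (Suc m) k \<omega> / tt H \<delta> \<rho> (n+Suc m)) ^ (2*p)))"

lemma mu_meas:
  assumes fbm: "is_fBM M H B"
  shows "mu M B n m k \<in> borel_measurable M"
proof -
  interpret sigma_finite_subalgebra M "gen_sigma M B n" by (rule fbm_subalg[OF fbm])
  show ?thesis unfolding mu_def
    by (intro borel_measurable_add borel_measurable_diff borel_measurable_times borel_measurable_const
        borel_measurable_cond_exp2)
qed

lemma Fn_meas:
  assumes fbm: "is_fBM M H B"
  shows "Fn M B H \<delta> \<rho> p n \<in> borel_measurable M"
proof -
  have [measurable]: "\<And>n m k. mu M B n m k \<in> borel_measurable M" by (rule mu_meas[OF fbm])
  show ?thesis unfolding Fn_def[abs_def] by measurable
qed

lemma term_bound:
  assumes fbm: "is_fBM M H B" and H: "0 < H" "H < 1" and \<rho>: "0 < \<rho>" and m: "1 \<le> m"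
    and k: "k \<in> {1..2^(n+m-1)}" and p: "1 \<le> p"
  shows "(\<integral>\<^sup>+\<omega>. ennreal ((mu M B n m k \<omega> / tt H \<delta> \<rho> (n+m)) ^ (2*p)) \<partial>M)
     \<le> ennreal (fact (2*p) / (2^p * fact p) * (4/\<rho>^2)^p * (2 powr (-2*\<delta>*real p)) ^ (n+m))"
proof -
  define t where "t = tt H \<delta> \<rho> (n+m)"
  define C where "C = fact (2*p) / (2^p * fact p :: real)"
  have tpos: "0 < t" unfolding t_def tt_def using \<rho> by simp
  have C0: "0 \<le> C" unfolding C_def by simp
  have mm: "mu M B n m k \<in> borel_measurable M" by (rule mu_meas[OF fbm])
  have "(\<integral>\<^sup>+\<omega>. ennreal ((mu M B n m k \<omega> / t) ^ (2*p)) \<partial>M)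
      = (\<integral>\<^sup>+\<omega>. ennreal ((mu M B n m k \<omega>) ^ (2*p)) * ennreal (1 / t^(2*p)) \<partial>M)"
  proof (intro nn_integral_cong)
    fix x
    have "(mu M B n m k x / t) ^ (2*p) = (mu M B n m k x) ^ (2*p) * (1 / t^(2*p))"
      by (simp add: power_divide)
    moreover have "0 \<le> (mu M B n m k x) ^ (2*p)" by (simp add: zero_le_even_power)
    moreover have "0 \<le> 1 / t^(2*p)" using tpos by simp
    ultimately show "ennreal ((mu M B n m k x / t) ^ (2*p)) = ennreal ((mu M B n m k x) ^ (2*p)) * ennreal (1 / t^(2*p))"
      by (metis ennreal_mult)
  qed
  also have "\<dots> = (\<integral>\<^sup>+\<omega>. ennreal ((mu M B n m k \<omega>) ^ (2*p)) \<partial>M) * ennreal (1 / t^(2*p))"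
    by (rule nn_integral_multc) (use mm in measurable)
  also have "\<dots> \<le> ennreal (C * ((1/2^(n+m)) powr (2*H)) ^ p) * ennreal (1 / t^(2*p))"
    unfolding C_def by (intro mult_right_mono core_bound[OF fbm H m k p]) auto
  also have "\<dots> = ennreal (C * ((1/2^(n+m)) powr (2*H)) ^ p / t^(2*p))"
    using tpos C0 by (simp add: ennreal_mult''[symmetric] divide_inverse)
  also have "\<dots> = ennreal (C * (4/\<rho>^2)^p * (2 powr (-2*\<delta>*real p)) ^ (n+m))"
    unfolding t_def tt_def by (subst alg[OF \<rho>]) simp
  finally show ?thesis unfolding t_def C_def .
qed

lemma Fn_int:
  fixes \<delta> :: real
  assumes fbm: "is_fBM M H B" and H: "0 < H" "H < 1" and \<rho>: "0 < \<rho>" and p: "1 \<le> p"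
  defines "K \<equiv> fact (2*p) / (2^p * fact p) * (4/\<rho>^2)^p"
  defines "r \<equiv> 2 powr (-2*\<delta>*real p)"
  shows "(\<integral>\<^sup>+\<omega>. Fn M B H \<delta> \<rho> p n \<omega> \<partial>M) \<le> (\<Sum>m. ennreal (K * (2*r)^(n+Suc m)))"
proof -
  have [measurable]: "\<And>n m k. mu M B n m k \<in> borel_measurable M" by (rule mu_meas[OF fbm])
  have T: "\<And>n m k. (\<lambda>\<omega>. ennreal ((mu M B n m k \<omega> / tt H \<delta> \<rho> j) ^ (2*p))) \<in> borel_measurable M" for j
    by measurable
  have K0: "0 \<le> K" unfolding K_def by simp
  have r0: "0 \<le> r" unfolding r_def by simp
  have "(\<integral>\<^sup>+\<omega>. Fn M B H \<delta> \<rho> p n \<omega> \<partial>M)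
     = (\<Sum>m. \<integral>\<^sup>+\<omega>. (\<Sum>k\<in>{1..2^(n+Suc m-1)}.
          ennreal ((mu M B n (Suc m) k \<omega> / tt H \<delta> \<rho> (n+Suc m)) ^ (2*p))) \<partial>M)"
    unfolding Fn_def by (rule nn_integral_suminf) measurable
  also have "\<dots> = (\<Sum>m. \<Sum>k\<in>{1..2^(n+Suc m-1)}. \<integral>\<^sup>+\<omega>. 
          ennreal ((mu M B n (Suc m) k \<omega> / tt H \<delta> \<rho> (n+Suc m)) ^ (2*p)) \<partial>M)"
    by (subst nn_integral_sum) (rule T, rule refl)
  also have "\<dots> \<le> (\<Sum>m. ennreal (K * (2*r)^(n+Suc m)))"
  proof (rule suminf_le)
    fix m
    define j where "j = n + Suc m"
    have "(\<Sum>k\<in>{1..2^(n+Suc m-1)}. \<integral>\<^sup>+\<omega>. 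
          ennreal ((mu M B n (Suc m) k \<omega> / tt H \<delta> \<rho> (n+Suc m)) ^ (2*p)) \<partial>M)
        \<le> (\<Sum>k\<in>{1..2^(n+Suc m-1)::nat}. ennreal (K * r^(n + Suc m)))"
      unfolding K_def r_def
      by (intro sum_mono term_bound[OF fbm H \<rho> _ _ p]) auto
    also have "\<dots> = ennreal (real (2^(j-1)) * (K * r^j))"
      unfolding j_def by (simp add: ennreal_mult ennreal_of_nat_eq_real_of_nat K0 r0)
    also have "\<dots> \<le> ennreal (K * (2*r)^j)"
    proof (rule ennreal_leI)
      have "real (2^(j-1)) \<le> 2^j" by simp
      then have "real (2^(j-1)) * (K * r^j) \<le> 2^j * (K * r^j)"
        using K0 r0 by (intro mult_right_mono) auto
      then show "real (2^(j-1)) * (K * r^j) \<le> K * (2*r)^j" by (simp add: power_mult_distrib algebra_simps)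
    qed
    finally show "(\<Sum>k\<in>{1..2^(n+Suc m-1)}. \<integral>\<^sup>+\<omega>. 
          ennreal ((mu M B n (Suc m) k \<omega> / tt H \<delta> \<rho> (n+Suc m)) ^ (2*p)) \<partial>M)
        \<le> ennreal (K * (2*r)^(n+Suc m))" unfolding j_def .
  qed (auto intro: summableI)
  finally show ?thesis .
qed

lemma E1:
  assumes \<rho>: "0 < \<rho>" and p: "1 \<le> p" and w: "\<omega> \<in> evE M B H \<delta> \<rho> n"
  shows "1 \<le> Fn M B H \<delta> \<rho> p n \<omega>"
proof -
  obtain m k where m: "1 \<le> m" and k: "k \<in> {1..2^(n+m-1)}"
    and gt: "\<bar>mu M B n m k \<omega>\<bar> > \<rho>/2 * 2 powr (- real (n+m) * (H - \<delta>))"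
    using w unfolding evE_def mem_Collect_eq by (elim conjE exE bexE) (rule that)
  obtain m' where m': "m = Suc m'" using m by (cases m) auto
  define t where "t = tt H \<delta> \<rho> (n+m)"
  have tpos: "0 < t" unfolding t_def tt_def using \<rho> by simp
  have gt': "\<bar>mu M B n m k \<omega>\<bar> > t" using gt unfolding t_def tt_def .
  have ad: "\<bar>mu M B n m k \<omega> / t\<bar> = \<bar>mu M B n m k \<omega>\<bar> / t"
    using tpos by (simp only: abs_divide abs_of_pos)
  have "1 \<le> \<bar>mu M B n m k \<omega>\<bar> / t" using gt' tpos by (simp only: le_divide_eq_1_pos less_imp_le)
  then have "1 \<le> \<bar>mu M B n m k \<omega> / t\<bar>" unfolding ad .
  then have "1 \<le> \<bar>mu M B n m k \<omega> / t\<bar> ^ (2*p)" by (rule one_le_power)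
  also have "\<bar>mu M B n m k \<omega> / t\<bar> ^ (2*p) = (mu M B n m k \<omega> / t) ^ (2*p)"
    by (rule power_even_abs) simp
  finally have one: "1 \<le> ennreal ((mu M B n m k \<omega> / t) ^ (2*p))" by simp
  define f where "f = (\<lambda>m k. ennreal ((mu M B n (Suc m) k \<omega> / tt H \<delta> \<rho> (n+Suc m)) ^ (2*p)))"
  have "ennreal ((mu M B n m k \<omega> / t) ^ (2*p)) = f m' k" unfolding f_def t_def m' by simp
  also have "\<dots> \<le> (\<Sum>k\<in>{1..2^(n+Suc m'-1)}. f m' k)"
    by (rule member_le_sum) (use k m' in simp_all)
  also have "\<dots> = (\<Sum>i\<in>{m'}. \<Sum>k\<in>{1..2^(n+Suc i-1)}. f i k)" by simp
  also have "\<dots> \<le> (\<Sum>i. \<Sum>k\<in>{1..2^(n+Suc i-1)}. f i k)"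
    by (rule sum_le_suminf) (simp_all add: summableI)
  also have "\<dots> = Fn M B H \<delta> \<rho> p n \<omega>" unfolding Fn_def f_def by simp
  finally show ?thesis using one by (rule order.trans[rotated])
qed

lemma choose_p:
  fixes \<theta> \<delta> :: real
  assumes "0 < \<delta>" "0 \<le> \<theta>"
  shows "\<exists>p::nat. 1 \<le> p \<and> 2 * 2 powr (-2*\<delta>*real p) * exp \<theta> < 1"
proof -
  have l2: "0 < ln (2::real)" "ln (2::real) < 1" using ln_2_less_1 by auto
  obtain N :: nat where N: "(\<theta> + 1) / (2*\<delta>*ln 2) < real N" using reals_Archimedean2 by blast
  define p where "p = Suc N"
  have pN: "(\<theta> + 1) / (2*\<delta>*ln 2) < real p" using N unfolding p_def by simp
  then have "\<theta> + 1 < real p * (2*\<delta>*ln 2)" using assms l2 by (simp add: divide_less_eq)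
  then have lt: "ln 2 - 2*\<delta>*real p * ln 2 + \<theta> < 0" using l2 by (simp add: algebra_simps)
  have "2 * 2 powr (-2*\<delta>*real p) * exp \<theta> = exp (ln 2 - 2*\<delta>*real p * ln 2 + \<theta>)"
    by (simp add: powr_def exp_add exp_diff exp_minus divide_inverse)
  also have "\<dots> < 1" using lt by simp
  finally show ?thesis unfolding p_def by auto
qed

lemma S_int:
  assumes fbm: "is_fBM M H B" and H: "0 < H" "H < 1" and \<rho>: "0 < \<rho>" and \<delta>: "0 < \<delta>" and th: "0 \<le> \<theta>"
  shows "\<exists>p\<ge>1. (\<integral>\<^sup>+\<omega>. (\<Sum>n. ennreal (exp (\<theta> * real n)) * Fn M B H \<delta> \<rho> p n \<omega>) \<partial>M) < \<infinity>"
proof -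
  obtain p :: nat where p: "1 \<le> p" and pq: "2 * 2 powr (-2*\<delta>*real p) * exp \<theta> < 1"
    using choose_p[OF \<delta> th] by blast
  define K where "K = fact (2*p) / (2^p * fact p) * (4/\<rho>^2)^p"
  define q where "q = 2 * 2 powr (-2*\<delta>*real p)"
  have K0: "0 \<le> K" unfolding K_def by simp
  have q0: "0 \<le> q" unfolding q_def by simp
  have e1: "1 \<le> exp \<theta>" using th by simp
  have qe: "q * exp \<theta> < 1" using pq unfolding q_def .
  have q1: "q < 1"
  proof -
    have "q \<le> q * exp \<theta>" using q0 e1 by (simp add: mult_le_cancel_left1)
    then show ?thesis using qe by linarith
  qed
  define K' where "K' = K * q / (1 - q)"
  have K'0: "0 \<le> K'" unfolding K'_def using K0 q0 q1 by simp
  have Fm: "\<And>n. Fn M B H \<delta> \<rho> p n \<in> borel_measurable M" by (rule Fn_meas[OF fbm])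
  have inner: "(\<Sum>m. ennreal (K * q^(n+Suc m))) = ennreal (K' * q^n)" for n
  proof -
    have "(\<lambda>m. q^m) sums (1/(1-q))" using q0 q1 by (intro geometric_sums) simp
    then have "(\<lambda>m. K * q^(n+1) * q^m) sums (K * q^(n+1) * (1/(1-q)))" by (rule sums_mult)
    moreover have "(\<lambda>m. K * q^(n+1) * q^m) = (\<lambda>m. K * q^(n+Suc m))"
      by (simp add: power_add mult.assoc)
    moreover have "K * q^(n+1) * (1/(1-q)) = K' * q^n"
      unfolding K'_def by (simp add: power_add divide_inverse mult.assoc mult.left_commute)
    ultimately have s: "(\<lambda>m. K * q^(n+Suc m)) sums (K' * q^n)" by simp
    have sm: "summable (\<lambda>m. K * q^(n+Suc m))" using s by (rule sums_summable)
    have "(\<Sum>m. ennreal (K * q^(n+Suc m))) = ennreal (\<Sum>m. K * q^(n+Suc m))"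
      by (rule suminf_ennreal2) (intro mult_nonneg_nonneg zero_le_power K0 q0, rule sm)
    also have "(\<Sum>m. K * q^(n+Suc m)) = K' * q^n" using s by (rule sums_unique[symmetric])
    finally show ?thesis .
  qed
  have "(\<integral>\<^sup>+\<omega>. (\<Sum>n. ennreal (exp (\<theta> * real n)) * Fn M B H \<delta> \<rho> p n \<omega>) \<partial>M)
      = (\<Sum>n. \<integral>\<^sup>+\<omega>. ennreal (exp (\<theta> * real n)) * Fn M B H \<delta> \<rho> p n \<omega> \<partial>M)"
    by (rule nn_integral_suminf) (use Fm in measurable)
  also have "\<dots> = (\<Sum>n. ennreal (exp (\<theta> * real n)) * (\<integral>\<^sup>+\<omega>. Fn M B H \<delta> \<rho> p n \<omega> \<partial>M))"
    by (subst nn_integral_cmult) (use Fm in auto)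
  also have "\<dots> \<le> (\<Sum>n. ennreal (exp (\<theta> * real n)) * ennreal (K' * q^n))"
  proof (rule suminf_le)
    fix n
    have "(\<integral>\<^sup>+\<omega>. Fn M B H \<delta> \<rho> p n \<omega> \<partial>M) \<le> (\<Sum>m. ennreal (K * q^(n+Suc m)))"
      unfolding K_def q_def by (rule Fn_int[OF fbm H \<rho> p])
    then have "(\<integral>\<^sup>+\<omega>. Fn M B H \<delta> \<rho> p n \<omega> \<partial>M) \<le> ennreal (K' * q^n)"
      by (simp only: inner)
    then show "ennreal (exp (\<theta> * real n)) * (\<integral>\<^sup>+\<omega>. Fn M B H \<delta> \<rho> p n \<omega> \<partial>M)
        \<le> ennreal (exp (\<theta> * real n)) * ennreal (K' * q^n)" by (rule mult_left_mono) simp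
  qed (simp_all add: summableI)
  also have "\<dots> = (\<Sum>n. ennreal (K' * (exp \<theta> * q)^n))"
  proof (rule suminf_cong)
    fix n
    have "exp (\<theta> * real n) = exp \<theta> ^ n" by (simp add: exp_of_nat_mult[symmetric] mult.commute)
    then show "ennreal (exp (\<theta> * real n)) * ennreal (K' * q^n) = ennreal (K' * (exp \<theta> * q)^n)"
      using K'0 q0 by (simp add: ennreal_mult[symmetric] power_mult_distrib algebra_simps)
  qed
  also have "\<dots> < \<infinity>"
  proof -
    have "summable (\<lambda>n. K' * (exp \<theta> * q)^n)"
      using qe q0 by (intro summable_mult summable_geometric) (simp add: mult.commute)
    then have "(\<Sum>n. ennreal (K' * (exp \<theta> * q)^n)) \<noteq> \<top>"
      by (rule ennreal_suminf_neq_top) (use K'0 q0 in simp)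
    then show ?thesis by (simp add: top.not_eq_extremum)
  qed
  finally show ?thesis using p by blast
qed

lemma ennreal_fin_nat_bound:
  fixes G :: ennreal
  assumes "G \<noteq> \<infinity>"
  shows "\<exists>N::nat. \<not> (of_nat N \<le> G)"
proof -
  obtain g where g: "G = ennreal g" "0 \<le> g" using assms by (cases G) auto
  obtain N :: nat where N: "g < real N" using reals_Archimedean2 by blast
  have "\<not> (of_nat N \<le> G)" unfolding g using N g(2)
    by (simp add: ennreal_of_nat_eq_real_of_nat)
  then show ?thesis by blast
qed

lemma fin_from_G:
  fixes c :: "nat \<Rightarrow> ennreal"
  assumes c: "\<And>n. 1 \<le> p \<Longrightarrow> \<omega> \<in> E n \<Longrightarrow> 1 \<le> c n"
    and p: "1 \<le> p" and G: "(\<Sum>n. c n) \<noteq> \<infinity>"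
  shows "finite {n::nat. n \<ge> 1 \<and> \<omega> \<in> E n}"
proof (rule ccontr)
  assume inf: "infinite {n::nat. n \<ge> 1 \<and> \<omega> \<in> E n}"
  obtain N :: nat where N: "\<not> (of_nat N \<le> (\<Sum>n. c n))" using ennreal_fin_nat_bound[OF G] by blast
  obtain T where T: "T \<subseteq> {n::nat. n \<ge> 1 \<and> \<omega> \<in> E n}" "finite T" "card T = N"
    using infinite_arbitrarily_large[OF inf] by blast
  have "of_nat N = (\<Sum>n\<in>T. (1::ennreal))" using T by simp
  also have "\<dots> \<le> (\<Sum>n\<in>T. c n)"
    by (rule sum_mono) (use T c p in blast)
  also have "\<dots> \<le> (\<Sum>n. c n)"
    by (rule sum_le_suminf) (simp_all add: T summableI)
  finally show False using N by blast
qed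

theorem lemma6:
  fixes M :: "'a measure" and B :: "real \<Rightarrow> 'a \<Rightarrow> real" and H \<delta> \<rho> :: real
  assumes "0 < H" "H < 1" "0 < \<delta>" "\<delta> < H" "0 < \<rho>"
    and "is_fBM M H B"
  defines "E \<equiv> evE M B H \<delta> \<rho>"
  defines "NE \<equiv> (\<lambda>\<omega>. Sup {n::nat. n \<ge> 1 \<and> \<omega> \<in> E n})"
  shows "measure M (\<Inter>j. \<Union>n\<in>{j..}. E n) = 0
       \<and> (AE \<omega> in M. finite {n::nat. n \<ge> 1 \<and> \<omega> \<in> E n})
       \<and> (\<forall>\<theta>::real. (\<integral>\<^sup>+\<omega>. ennreal (exp (\<theta> * real (NE \<omega>))) \<partial>M) < \<infinity>)"
proof -
  note fbm = assms(6)
  note H = assms(1) assms(2)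
  note \<delta> = assms(3)
  note \<rho> = assms(5)
  interpret prob_space M by (rule fbm_prob[OF fbm])
  have Fm: "\<And>p n. Fn M B H \<delta> \<rho> p n \<in> borel_measurable M" by (rule Fn_meas[OF fbm])
  have EE: "\<And>n. E n \<subseteq> space M" unfolding E_def evE_def by blast
  obtain p0 where p0: "1 \<le> p0"
    and I0: "(\<integral>\<^sup>+\<omega>. (\<Sum>n. ennreal (exp (0 * real n)) * Fn M B H \<delta> \<rho> p0 n \<omega>) \<partial>M) < \<infinity>"
    using S_int[OF fbm H \<rho> \<delta>, of 0] by auto
  define G where "G = (\<lambda>\<omega>. \<Sum>n. ennreal (exp (0 * real n)) * Fn M B H \<delta> \<rho> p0 n \<omega>)"
  have Gm: "G \<in> borel_measurable M" unfolding G_def using Fm by measurable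
  have GI: "integral\<^sup>N M G \<noteq> \<infinity>" using I0 unfolding G_def by simp
  have Gfin: "finite {n::nat. n \<ge> 1 \<and> \<omega> \<in> E n}" if "G \<omega> \<noteq> \<infinity>" for \<omega>
  proof (rule fin_from_G[where p=p0])
    show "1 \<le> ennreal (exp (0 * real n)) * Fn M B H \<delta> \<rho> p0 n \<omega>" if "1 \<le> p0" "\<omega> \<in> E n" for n
      using E1[OF \<rho> p0, of \<omega> M B H \<delta> n] that unfolding E_def by simp
    show "1 \<le> p0" by (rule p0)
    show "(\<Sum>n. ennreal (exp (0 * real n)) * Fn M B H \<delta> \<rho> p0 n \<omega>) \<noteq> \<infinity>"
      using that unfolding G_def .
  qed
  have AEG: "AE \<omega> in M. G \<omega> \<noteq> \<infinity>" by (rule nn_integral_PInf_AE[OF Gm GI])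
  have null: "emeasure M (G -` {\<infinity>} \<inter> space M) = 0" by (rule nn_integral_PInf[OF Gm GI])
  have nullm: "G -` {\<infinity>} \<inter> space M \<in> sets M" using Gm by measurable
  have sub: "(\<Inter>j. \<Union>n\<in>{j..}. E n) \<subseteq> G -` {\<infinity>} \<inter> space M"
  proof
    fix \<omega> assume w: "\<omega> \<in> (\<Inter>j. \<Union>n\<in>{j..}. E n)"
    have ex: "\<exists>n\<ge>j. \<omega> \<in> E n" for j using w by blast
    then obtain n0 where "\<omega> \<in> E n0" by blast
    then have sp: "\<omega> \<in> space M" using EE by blast
    have "infinite {n::nat. n \<ge> 1 \<and> \<omega> \<in> E n}"
      unfolding infinite_nat_iff_unbounded_le
    proof
      fix m
      obtain n where "n \<ge> max m 1" "\<omega> \<in> E n" using ex by blast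
      then show "\<exists>n\<ge>m. n \<in> {n. 1 \<le> n \<and> \<omega> \<in> E n}" by auto
    qed
    then have "G \<omega> = \<infinity>" using Gfin by blast
    then show "\<omega> \<in> G -` {\<infinity>} \<inter> space M" using sp by blast
  qed
  have part1: "measure M (\<Inter>j. \<Union>n\<in>{j..}. E n) = 0"
  proof -
    have "emeasure M (\<Inter>j. \<Union>n\<in>{j..}. E n) \<le> emeasure M (G -` {\<infinity>} \<inter> space M)"
      by (rule emeasure_mono[OF sub nullm])
    then have "emeasure M (\<Inter>j. \<Union>n\<in>{j..}. E n) = 0" using null by simp
    then show ?thesis by (simp add: measure_def)
  qed
  have part2: "AE \<omega> in M. finite {n::nat. n \<ge> 1 \<and> \<omega> \<in> E n}"
    using AEG by eventually_elim (rule Gfin)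
  have part3: "(\<integral>\<^sup>+\<omega>. ennreal (exp (\<theta> * real (NE \<omega>))) \<partial>M) < \<infinity>" for \<theta> :: real
  proof -
    define \<theta>' where "\<theta>' = \<bar>\<theta>\<bar>"
    have th: "0 \<le> \<theta>'" unfolding \<theta>'_def by simp
    obtain p where p: "1 \<le> p"
      and I: "(\<integral>\<^sup>+\<omega>. (\<Sum>n. ennreal (exp (\<theta>' * real n)) * Fn M B H \<delta> \<rho> p n \<omega>) \<partial>M) < \<infinity>"
      using S_int[OF fbm H \<rho> \<delta> th] by auto
    define S where "S = (\<lambda>\<omega>. \<Sum>n. ennreal (exp (\<theta>' * real n)) * Fn M B H \<delta> \<rho> p n \<omega>)"
    have Sm: "S \<in> borel_measurable M" unfolding S_def using Fm by measurable
    have pw: "ennreal (exp (\<theta> * real (NE \<omega>))) \<le> 1 + S \<omega>"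
      if fin: "finite {n::nat. n \<ge> 1 \<and> \<omega> \<in> E n}" for \<omega>
    proof (cases "{n::nat. n \<ge> 1 \<and> \<omega> \<in> E n} = {}")
      case True
      then have "NE \<omega> = 0" unfolding NE_def by (simp only: Sup_nat_empty)
      then show ?thesis by simp
    next
      case False
      define N where "N = NE \<omega>"
      have NM: "N = Max {n::nat. n \<ge> 1 \<and> \<omega> \<in> E n}" unfolding N_def NE_def Sup_nat_def using False by (simp only: if_False)
      have "N \<in> {n::nat. n \<ge> 1 \<and> \<omega> \<in> E n}" unfolding NM using fin False by (rule Max_in)
      then have wN: "\<omega> \<in> evE M B H \<delta> \<rho> N" unfolding E_def by simp
      have F1: "1 \<le> Fn M B H \<delta> \<rho> p N \<omega>" by (rule E1[OF \<rho> p wN])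
      have "exp (\<theta> * real N) \<le> exp (\<theta>' * real N)" unfolding \<theta>'_def exp_le_cancel_iff
        by (intro mult_right_mono) auto
      then have "ennreal (exp (\<theta> * real N)) \<le> ennreal (exp (\<theta>' * real N))" by (rule ennreal_leI)
      also have "\<dots> = ennreal (exp (\<theta>' * real N)) * 1" by simp
      also have "\<dots> \<le> ennreal (exp (\<theta>' * real N)) * Fn M B H \<delta> \<rho> p N \<omega>"
        by (rule mult_left_mono[OF F1]) simp
      also have "\<dots> = (\<Sum>n\<in>{N}. ennreal (exp (\<theta>' * real n)) * Fn M B H \<delta> \<rho> p n \<omega>)" by simp
      also have "\<dots> \<le> S \<omega>" unfolding S_def
        by (rule sum_le_suminf) (simp_all add: summableI)
      also have "\<dots> \<le> 1 + S \<omega>" by simp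
      finally show ?thesis unfolding N_def .
    qed
    have "(\<integral>\<^sup>+\<omega>. ennreal (exp (\<theta> * real (NE \<omega>))) \<partial>M) \<le> (\<integral>\<^sup>+\<omega>. (1 + S \<omega>) \<partial>M)"
    proof (rule nn_integral_mono_AE)
      show "AE \<omega> in M. ennreal (exp (\<theta> * real (NE \<omega>))) \<le> 1 + S \<omega>"
        using part2 by eventually_elim (rule pw)
    qed
    also have "\<dots> = (\<integral>\<^sup>+\<omega>. 1 \<partial>M) + (\<integral>\<^sup>+\<omega>. S \<omega> \<partial>M)"
      by (rule nn_integral_add) (simp_all add: Sm)
    also have "\<dots> = 1 + (\<integral>\<^sup>+\<omega>. S \<omega> \<partial>M)" by (simp add: emeasure_space_1)
    also have "\<dots> < \<infinity>" using I unfolding S_def by (simp add: top.not_eq_extremum)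
    finally show ?thesis .
  qed
  show ?thesis using part1 part2 part3 by blast
qed

end
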